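(* Let $(\mathcal G_{yz},\beta)$ be obtained from $(\mathcal G_x,\alpha)$ by decomposing the node $x$ into $y$ and $z$, and assume the FCFS chains $W_x$ and $W_{yz}$ are positive recurrent. Let $\mathbb E[Q_x]$ and $\mathbb E[Q_{yz}]$ be the stationary mean word lengths (mean numbers of items) of $W_x$ and $W_{yz}$. Then $\mathbb E[Q_x]=\mathbb E[Q_{yz}]$.
   Context: A matching model consists of a finite connected simple graph and an arrival distribution on its nodes with positive entries. Under FCFS, the state is the word of unmatched item classes in order of arrival; an arriving item of class $i$ deletes the oldest letter of the word that is a neighbour of $i$, and if there is none $i$ is appended. Decomposition: given $\mathcal G_x=(\mathcal V,\xi)$ with node $x$ and arrival distribution $\alpha$, $\mathcal G_{yz}$ has node set $(\mathcal V\setminus\{x\})\cup\{y,z\}$ with $y,z$ new nodes; edges among $\mathcal V\setminus\{x\}$ are as in $\mathcal G_x$, each of $y$ and $z$ is adjacent exactly to the neighbours of $x$ in $\mathcal G_x$ (so $y,z$ are not adjacent), and the arrival distribution $\beta$ satisfies $\beta_y>0$, $\beta_z>0$, $\beta_y+\beta_z=\alpha_x$, $\beta_i=\alpha_i$ for $i\ne x$. *)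

theory Defs
  imports "HOL-Probability.Probability"
begin

definition simple_graph :: "'v set \<Rightarrow> ('v \<Rightarrow> 'v \<Rightarrow> bool) \<Rightarrow> bool" where
  "simple_graph V E \<longleftrightarrow> finite V \<and> (\<forall>u v. E u v \<longrightarrow> u \<in> V \<and> v \<in> V)
     \<and> (\<forall>u v. E u v \<longrightarrow> E v u) \<and> (\<forall>u. \<not> E u u)"

definition graph_connected :: "'v set \<Rightarrow> ('v \<Rightarrow> 'v \<Rightarrow> bool) \<Rightarrow> bool" where
  "graph_connected V E \<longleftrightarrow> (\<forall>u\<in>V. \<forall>v\<in>V. E\<^sup>*\<^sup>* u v)"

definition matching_model :: "'v set \<Rightarrow> ('v \<Rightarrow> 'v \<Rightarrow> bool) \<Rightarrow> 'v pmf \<Rightarrow> bool" where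
  "matching_model V E \<alpha> \<longleftrightarrow> simple_graph V E \<and> graph_connected V E \<and> V \<noteq> {}
     \<and> set_pmf \<alpha> = V"

text \<open>FCFS update: arriving item of class i deletes the oldest letter of w adjacent to i,
  otherwise i is appended.\<close>
definition fcfs_step :: "('v \<Rightarrow> 'v \<Rightarrow> bool) \<Rightarrow> 'v \<Rightarrow> 'v list \<Rightarrow> 'v list" where
  "fcfs_step E i w = (if \<exists>u\<in>set w. E i u then remove1 (hd (filter (E i) w)) w else w @ [i])"

definition fcfs_kernel :: "('v \<Rightarrow> 'v \<Rightarrow> bool) \<Rightarrow> 'v pmf \<Rightarrow> 'v list \<Rightarrow> 'v list pmf" where
  "fcfs_kernel E \<alpha> w = map_pmf (\<lambda>i. fcfs_step E i w) \<alpha>"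

definition fcfs_states :: "('v \<Rightarrow> 'v \<Rightarrow> bool) \<Rightarrow> 'v pmf \<Rightarrow> 'v list set" where
  "fcfs_states E \<alpha> = {w. (\<lambda>u v. v \<in> set_pmf (fcfs_kernel E \<alpha> u))\<^sup>*\<^sup>* [] w}"

text \<open>avoid_prob K s n w = probability that the chain started in w does not visit s
  at times 1..n.\<close>
primrec avoid_prob :: "('s \<Rightarrow> 's pmf) \<Rightarrow> 's \<Rightarrow> nat \<Rightarrow> 's \<Rightarrow> real" where
  "avoid_prob K s 0 w = 1"
| "avoid_prob K s (Suc n) w =
     measure_pmf.expectation (K w) (\<lambda>v. if v = s then 0 else avoid_prob K s n v)"

text \<open>Positive recurrence: every state s of the state space S has finite expected return
  time  E_s[T_s] = sum_n P_s(T_s > n).\<close>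
definition positive_recurrent :: "('s \<Rightarrow> 's pmf) \<Rightarrow> 's set \<Rightarrow> bool" where
  "positive_recurrent K S \<longleftrightarrow> (\<forall>s\<in>S. summable (\<lambda>n. avoid_prob K s n s))"

definition stationary :: "('s \<Rightarrow> 's pmf) \<Rightarrow> 's set \<Rightarrow> 's pmf \<Rightarrow> bool" where
  "stationary K S \<pi> \<longleftrightarrow> set_pmf \<pi> \<subseteq> S \<and> bind_pmf \<pi> K = \<pi>"

definition mean_length :: "'v list pmf \<Rightarrow> ennreal" where
  "mean_length \<pi> = (\<integral>\<^sup>+ w. ennreal (real (length w)) \<partial>measure_pmf \<pi>)"

definition decomposition ::
  "'v set \<Rightarrow> ('v \<Rightarrow> 'v \<Rightarrow> bool) \<Rightarrow> 'v pmf \<Rightarrow> 'v \<Rightarrow> 'v \<Rightarrow> 'v \<Rightarrow>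
   'v set \<Rightarrow> ('v \<Rightarrow> 'v \<Rightarrow> bool) \<Rightarrow> 'v pmf \<Rightarrow> bool" where
  "decomposition V E \<alpha> x y z V' E' \<beta> \<longleftrightarrow>
     x \<in> V \<and> y \<notin> V \<and> z \<notin> V \<and> y \<noteq> z
   \<and> V' = (V - {x}) \<union> {y, z}
   \<and> (\<forall>u v. E' u v \<longleftrightarrow>
        (u \<in> V - {x} \<and> v \<in> V - {x} \<and> E u v)
      \<or> (u \<in> {y, z} \<and> v \<in> V - {x} \<and> E x v)
      \<or> (u \<in> V - {x} \<and> v \<in> {y, z} \<and> E u x))
   \<and> set_pmf \<beta> = V'
   \<and> pmf \<beta> y > 0 \<and> pmf \<beta> z > 0 \<and> pmf \<beta> y + pmf \<beta> z = pmf \<alpha> x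
   \<and> (\<forall>i\<in>V - {x}. pmf \<beta> i = pmf \<alpha> i)"

end

theory Submission imports Defs begin

definition bnd :: "('s \<Rightarrow> real) \<Rightarrow> bool" where
  "bnd g \<longleftrightarrow> (\<forall>v. 0 \<le> g v \<and> g v \<le> 1)"

lemma int_bnd: "(\<And>v. \<bar>f v\<bar> \<le> B) \<Longrightarrow> integrable (measure_pmf p) (f :: 's \<Rightarrow> real)"
  by (rule measure_pmf.integrable_const_bound[where B=B]) auto

lemma exp_bind:
  fixes f :: "'b \<Rightarrow> real"
  assumes "\<And>v. 0 \<le> f v" "\<And>v. f v \<le> B"
  shows "measure_pmf.expectation (bind_pmf p K) f = measure_pmf.expectation p (\<lambda>v. measure_pmf.expectation (K v) f)"
proof -
  have i: "\<And>q. integrable (measure_pmf q) f" by (rule int_bnd[where B=B]) (use assms in force)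
  have n: "\<And>q. 0 \<le> measure_pmf.expectation q f" using assms by simp
  have i2: "integrable (measure_pmf p) (\<lambda>v. measure_pmf.expectation (K v) f)"
  proof (rule int_bnd[where B=B])
    fix v show "\<bar>measure_pmf.expectation (K v) f\<bar> \<le> B"
    proof -
      have "measure_pmf.expectation (K v) f \<le> B"
        by (rule measure_pmf.integral_le_const) (use i assms in auto)
      then show ?thesis using n[of "K v"] by auto
    qed
  qed
  have "ennreal (measure_pmf.expectation (bind_pmf p K) f) = (\<integral>\<^sup>+x. ennreal (f x) \<partial>bind_pmf p K)"
    by (rule nn_integral_eq_integral[symmetric]) (use i assms in auto)
  also have "\<dots> = (\<integral>\<^sup>+v. \<integral>\<^sup>+x. ennreal (f x) \<partial>K v \<partial>p)" by simp
  also have "\<dots> = (\<integral>\<^sup>+v. ennreal (measure_pmf.expectation (K v) f) \<partial>p)"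
    by (intro nn_integral_cong nn_integral_eq_integral) (use i assms in auto)
  also have "\<dots> = ennreal (measure_pmf.expectation p (\<lambda>v. measure_pmf.expectation (K v) f))"
    by (rule nn_integral_eq_integral) (use i2 n in auto)
  finally show ?thesis using n by (subst (asm) ennreal_inj) auto
qed

lemma exp_split:
  fixes f :: "'b \<Rightarrow> real"
  assumes "\<And>v. \<bar>f v\<bar> \<le> B"
  shows "measure_pmf.expectation p f = pmf p a * f a + measure_pmf.expectation p (\<lambda>v. if v = a then 0 else f v)"
proof -
  have B: "0 \<le> B" using assms[of a] by linarith
  have "f = (\<lambda>v. indicator {a} v * f a + (if v = a then 0 else f v))"
    by (auto simp: indicator_def)
  then have "measure_pmf.expectation p f = measure_pmf.expectation p (\<lambda>v. indicator {a} v * f a + (if v = a then 0 else f v))"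
    by simp
  also have "\<dots> = measure_pmf.expectation p (\<lambda>v. indicator {a} v * f a) + measure_pmf.expectation p (\<lambda>v. if v = a then 0 else f v)"
    by (rule Bochner_Integration.integral_add; rule int_bnd[where B=B]) (use assms B in \<open>auto simp: indicator_def abs_mult\<close>)
  also have "measure_pmf.expectation p (\<lambda>v. indicator {a} v * f a) = pmf p a * f a"
    by (simp add: measure_pmf_single)
  finally show ?thesis .
qed

definition Qop :: "('s \<Rightarrow> 's pmf) \<Rightarrow> 's \<Rightarrow> ('s \<Rightarrow> real) \<Rightarrow> 's \<Rightarrow> real" where
  "Qop K s g v = measure_pmf.expectation (K v) (\<lambda>u. if u = s then 0 else g u)"

definition Iop :: "'s pmf \<Rightarrow> 's \<Rightarrow> ('s \<Rightarrow> real) \<Rightarrow> real" where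
  "Iop p s g = measure_pmf.expectation p (\<lambda>w. if w = s then 0 else g w)"

lemma exp_bnd:
  fixes f :: "'b \<Rightarrow> real"
  assumes "\<And>v. 0 \<le> f v \<and> f v \<le> 1"
  shows "0 \<le> measure_pmf.expectation p f \<and> measure_pmf.expectation p f \<le> 1"
proof
  show "0 \<le> measure_pmf.expectation p f" using assms by simp
  show "measure_pmf.expectation p f \<le> 1"
    by (rule measure_pmf.integral_le_const) (use assms in \<open>auto intro!: int_bnd[where B=1]\<close>)
qed

lemma Qop_bnd: "bnd g \<Longrightarrow> bnd (Qop K s g)"
  unfolding bnd_def Qop_def by (intro allI exp_bnd) auto

lemma Qpow_bnd: "bnd g \<Longrightarrow> bnd ((Qop K s ^^ n) g)"
  by (induction n) (auto intro: Qop_bnd)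

lemma Qop_mono:
  assumes "bnd g" "bnd g'" "\<And>v. g v \<le> g' v"
  shows "Qop K s g v \<le> Qop K s g' v"
  unfolding Qop_def
  by (rule integral_mono; (rule int_bnd[where B=1])?) (use assms in \<open>auto simp: bnd_def\<close>)

lemma avoid_Suc: "avoid_prob K s (Suc n) = Qop K s (avoid_prob K s n)"
  by (rule ext) (simp add: Qop_def)

lemma avoid_eq: "avoid_prob K s n = (Qop K s ^^ n) (\<lambda>_. 1)"
  by (induction n) (simp_all add: avoid_Suc)

lemma avoid_bnd: "bnd (avoid_prob K s n)"
  unfolding avoid_eq by (rule Qpow_bnd) (simp add: bnd_def)

lemma avoid_ge0: "0 \<le> avoid_prob K s n v"
  using avoid_bnd[of K s n] by (auto simp: bnd_def)

lemma avoid_le1: "avoid_prob K s n v \<le> 1"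
  using avoid_bnd[of K s n] by (auto simp: bnd_def)

lemma Qpow_ge0: "bnd g \<Longrightarrow> 0 \<le> (Qop K s ^^ n) g v"
  using Qpow_bnd[where g=g and K=K and s=s and n=n] by (auto simp: bnd_def)

lemma Qpow_le1: "bnd g \<Longrightarrow> (Qop K s ^^ n) g v \<le> 1"
  using Qpow_bnd[where g=g and K=K and s=s and n=n] by (auto simp: bnd_def)

lemma Qpow_abs: "bnd g \<Longrightarrow> \<bar>(Qop K s ^^ n) g v\<bar> \<le> 1"
  using Qpow_bnd[where g=g and K=K and s=s and n=n] by (auto simp: bnd_def)

lemma avoid_abs: "\<bar>avoid_prob K s n v\<bar> \<le> 1"
  using avoid_bnd[of K s n] by (auto simp: bnd_def)

lemma Qpow_le: "bnd g \<Longrightarrow> (Qop K s ^^ n) g v \<le> avoid_prob K s n v"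
proof (induction n arbitrary: v)
  case 0 then show ?case by (simp add: bnd_def)
next
  case (Suc n)
  have "Qop K s ((Qop K s ^^ n) g) v \<le> Qop K s (avoid_prob K s n) v"
    by (rule Qop_mono) (use Suc Qpow_bnd avoid_bnd in auto)
  then show ?case by (simp add: avoid_eq)
qed

lemma stat_step:
  assumes "bind_pmf p K = p" "bnd g"
  shows "Iop p s g = pmf p s * Qop K s g s + Iop p s (Qop K s g)"
proof -
  have "Iop p s g = measure_pmf.expectation (bind_pmf p K) (\<lambda>w. if w = s then 0 else g w)"
    using assms by (simp add: Iop_def)
  also have "\<dots> = measure_pmf.expectation p (Qop K s g)"
    unfolding Qop_def by (rule exp_bind[where B=1]) (use assms in \<open>auto simp: bnd_def\<close>)
  also have "\<dots> = pmf p s * Qop K s g s + Iop p s (Qop K s g)"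
    unfolding Iop_def by (rule exp_split[where B=1]) (use Qop_bnd[OF assms(2)] in \<open>auto simp: bnd_def\<close>)
  finally show ?thesis .
qed

lemma stat_iter:
  assumes "bind_pmf p K = p" "bnd g"
  shows "Iop p s g = pmf p s * (\<Sum>k<n. (Qop K s ^^ Suc k) g s) + Iop p s ((Qop K s ^^ n) g)"
proof (induction n)
  case 0 then show ?case by simp
next
  case (Suc n)
  have b: "bnd ((Qop K s ^^ n) g)" by (rule Qpow_bnd[OF assms(2)])
  have "Iop p s ((Qop K s ^^ n) g) = pmf p s * (Qop K s ^^ Suc n) g s + Iop p s ((Qop K s ^^ Suc n) g)"
    using stat_step[OF assms(1) b, of s] by simp
  then show ?case using Suc by (simp add: algebra_simps)
qed

lemma Iop_tend:
  assumes "\<forall>v\<in>set_pmf p. (\<lambda>n. avoid_prob K s n v) \<longlonglongrightarrow> 0" "bnd g"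
  shows "(\<lambda>n. Iop p s ((Qop K s ^^ n) g)) \<longlonglongrightarrow> 0"
proof (rule tendsto_sandwich[where f="\<lambda>_. 0" and h="\<lambda>n. measure_pmf.expectation p (avoid_prob K s n)"])
  have "(\<lambda>n. measure_pmf.expectation p (avoid_prob K s n)) \<longlonglongrightarrow> measure_pmf.expectation p (\<lambda>_. 0)"
    by (rule integral_dominated_convergence[where w="\<lambda>_. 1"])
       (use assms avoid_abs in \<open>auto simp: bnd_def intro!: AE_pmfI\<close>)
  then show "(\<lambda>n. measure_pmf.expectation p (avoid_prob K s n)) \<longlonglongrightarrow> 0" by simp
  show "\<forall>\<^sub>F n in sequentially. 0 \<le> Iop p s ((Qop K s ^^ n) g)"
    using Qpow_bnd[OF assms(2)] by (auto simp: Iop_def bnd_def)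
  show "\<forall>\<^sub>F n in sequentially. Iop p s ((Qop K s ^^ n) g) \<le> measure_pmf.expectation p (avoid_prob K s n)"
  proof (intro always_eventually allI)
    fix n
    show "Iop p s ((Qop K s ^^ n) g) \<le> measure_pmf.expectation p (avoid_prob K s n)"
      unfolding Iop_def
    proof (rule integral_mono)
      show "integrable (measure_pmf p) (\<lambda>w. if w = s then 0 else (Qop K s ^^ n) g w)"
        by (rule int_bnd[where B=1]) (simp add: Qpow_abs[OF assms(2)])
      show "integrable (measure_pmf p) (avoid_prob K s n)"
        by (rule int_bnd[where B=1]) (rule avoid_abs)
      fix w
      show "(if w = s then 0 else (Qop K s ^^ n) g w) \<le> avoid_prob K s n w"
        using Qpow_le[OF assms(2), where K=K and s=s and n=n and v=w] avoid_ge0[where K=K and s=s and n=n and v=w] by (simp add: avoid_ge0)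
    qed
  qed
qed auto

lemma lim_gen:
  assumes "bind_pmf p K = p" "\<forall>v\<in>set_pmf p. (\<lambda>n. avoid_prob K s n v) \<longlonglongrightarrow> 0" "bnd g"
  shows "(\<lambda>n. pmf p s * (\<Sum>k<n. (Qop K s ^^ Suc k) g s)) \<longlonglongrightarrow> Iop p s g"
proof -
  have "(\<lambda>n. Iop p s g - Iop p s ((Qop K s ^^ n) g)) \<longlonglongrightarrow> Iop p s g - 0"
    by (intro tendsto_intros Iop_tend assms)
  moreover have "\<And>n. Iop p s g - Iop p s ((Qop K s ^^ n) g) = pmf p s * (\<Sum>k<n. (Qop K s ^^ Suc k) g s)"
    using stat_iter[OF assms(1,3)] by (simp add: algebra_simps)
  ultimately show ?thesis by simp
qed

lemma stat_unique:
  assumes "bind_pmf p K = p" "\<forall>v\<in>set_pmf p. (\<lambda>n. avoid_prob K s n v) \<longlonglongrightarrow> 0"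
    and "bind_pmf q K = q" "\<forall>v\<in>set_pmf q. (\<lambda>n. avoid_prob K s n v) \<longlonglongrightarrow> 0"
  shows "p = q"
proof -
  have one: "Iop r s (\<lambda>_. 1) = 1 - pmf r s" for r :: "'a pmf"
    using exp_split[of "\<lambda>_. 1::real" 1 r s] by (simp add: Iop_def)
  have b1: "bnd (\<lambda>_::'a. 1::real)" by (simp add: bnd_def)
  define S where "S g n = (\<Sum>k<n. (Qop K s ^^ Suc k) g s)" for g n
  have Lp: "bnd g \<Longrightarrow> (\<lambda>n. pmf p s * S g n) \<longlonglongrightarrow> Iop p s g" for g
    unfolding S_def by (rule lim_gen[OF assms(1,2)])
  have Lq: "bnd g \<Longrightarrow> (\<lambda>n. pmf q s * S g n) \<longlonglongrightarrow> Iop q s g" for g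
    unfolding S_def by (rule lim_gen[OF assms(3,4)])
  have pos: "0 < pmf r s" if L: "(\<lambda>n. pmf r s * S (\<lambda>_. 1) n) \<longlonglongrightarrow> Iop r s (\<lambda>_. 1)" for r
  proof (rule ccontr)
    assume "\<not> 0 < pmf r s"
    then have "pmf r s = 0" using pmf_nonneg[of r s] by linarith
    with L one[of r] have "(\<lambda>n. 0::real) \<longlonglongrightarrow> 1" by simp
    then show False using LIMSEQ_unique[OF tendsto_const] by fastforce
  qed
  have pp: "0 < pmf p s" by (rule pos[OF Lp[OF b1]])
  have pq: "0 < pmf q s" by (rule pos[OF Lq[OF b1]])
  have "(\<lambda>n. (1 / pmf p s) * (pmf p s * S (\<lambda>_. 1) n)) \<longlonglongrightarrow> (1 / pmf p s) * Iop p s (\<lambda>_. 1)"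
    by (intro tendsto_intros Lp b1)
  then have A: "S (\<lambda>_. 1) \<longlonglongrightarrow> (1 / pmf p s) * (1 - pmf p s)" using pp one by simp
  have "(\<lambda>n. (1 / pmf q s) * (pmf q s * S (\<lambda>_. 1) n)) \<longlonglongrightarrow> (1 / pmf q s) * Iop q s (\<lambda>_. 1)"
    by (intro tendsto_intros Lq b1)
  then have B: "S (\<lambda>_. 1) \<longlonglongrightarrow> (1 / pmf q s) * (1 - pmf q s)" using pq one by simp
  have "(1 / pmf p s) * (1 - pmf p s) = (1 / pmf q s) * (1 - pmf q s)" by (rule LIMSEQ_unique[OF A B])
  then have "1 / pmf p s = 1 / pmf q s" using pp pq by (simp add: field_simps)
  then have eqs: "pmf p s = pmf q s" by simp
  show ?thesis
  proof (rule pmf_eqI)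
    fix w
    show "pmf p w = pmf q w"
    proof (cases "w = s")
      case True then show ?thesis using eqs by simp
    next
      case False
      have bi: "bnd (indicator {w} :: 'a \<Rightarrow> real)" by (simp add: bnd_def indicator_def)
      have I: "Iop r s (indicator {w}) = pmf r w" for r :: "'a pmf"
      proof -
        have "(\<lambda>u. if u = s then 0 else indicator {w} u :: real) = indicator {w}"
          using False by (auto simp: indicator_def)
        then show ?thesis by (simp add: Iop_def measure_pmf_single)
      qed
      have L: "(\<lambda>n. pmf p s * S (indicator {w}) n) \<longlonglongrightarrow> Iop q s (indicator {w})"
        using Lq[OF bi] eqs by simp
      show ?thesis using LIMSEQ_unique[OF Lp[OF bi] L] I by simp
    qed
  qed
qed

lemma avoid_step:
  assumes "v \<noteq> s"
  shows "pmf (K u) v * avoid_prob K s n v \<le> avoid_prob K s (Suc n) u"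
proof -
  have "avoid_prob K s (Suc n) u = pmf (K u) v * (if v = s then 0 else avoid_prob K s n v)
     + measure_pmf.expectation (K u) (\<lambda>x. if x = v then 0 else (if x = s then 0 else avoid_prob K s n x))"
    by (simp only: avoid_prob.simps, rule exp_split[where B=1]) (use avoid_bnd[of K s n] in \<open>auto simp: bnd_def\<close>)
  moreover have "0 \<le> measure_pmf.expectation (K u) (\<lambda>x. if x = v then 0 else (if x = s then 0 else avoid_prob K s n x))"
    by (rule Bochner_Integration.integral_nonneg) (auto simp: avoid_ge0)
  ultimately show ?thesis using assms by simp
qed

lemma reach:
  assumes "(\<lambda>u v. v \<in> set_pmf (K u))\<^sup>*\<^sup>* s v"
  shows "v = s \<or> (\<exists>k c. c > 0 \<and> (\<forall>n. c * avoid_prob K s n v \<le> avoid_prob K s (n + k) s))"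
  using assms
proof (induction rule: rtranclp_induct)
  case base then show ?case by simp
next
  case (step u v)
  show ?case
  proof (cases "v = s")
    case True then show ?thesis by simp
  next
    case vs: False
    have pv: "pmf (K u) v > 0" using step(2) by (simp add: pmf_positive)
    show ?thesis
    proof (cases "u = s")
      case True
      then have "\<forall>n. pmf (K u) v * avoid_prob K s n v \<le> avoid_prob K s (n + 1) s"
        using avoid_step[OF vs, of K u] by simp
      then show ?thesis using pv by (intro disjI2 exI[of _ 1] exI[of _ "pmf (K u) v"]) auto
    next
      case False
      with step(3) obtain k c where c: "c > 0" "\<forall>n. c * avoid_prob K s n u \<le> avoid_prob K s (n + k) s"
        by blast
      have "\<forall>n. (c * pmf (K u) v) * avoid_prob K s n v \<le> avoid_prob K s (n + (Suc k)) s"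
      proof
        fix n
        have "(c * pmf (K u) v) * avoid_prob K s n v \<le> c * avoid_prob K s (Suc n) u"
          using avoid_step[OF vs, of K u n] c(1) by (simp add: mult.assoc)
        also have "\<dots> \<le> avoid_prob K s (Suc n + k) s" using c(2) by blast
        finally show "(c * pmf (K u) v) * avoid_prob K s n v \<le> avoid_prob K s (n + (Suc k)) s" by simp
      qed
      then show ?thesis using c pv by (intro disjI2 exI[of _ "Suc k"] exI[of _ "c * pmf (K u) v"]) auto
    qed
  qed
qed

lemma avoid_to0:
  assumes "(\<lambda>u v. v \<in> set_pmf (K u))\<^sup>*\<^sup>* s v" "summable (\<lambda>n. avoid_prob K s n s)"
  shows "(\<lambda>n. avoid_prob K s n v) \<longlonglongrightarrow> 0"
proof -
  have s0: "(\<lambda>n. avoid_prob K s n s) \<longlonglongrightarrow> 0" by (rule summable_LIMSEQ_zero[OF assms(2)])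
  from reach[OF assms(1)] show ?thesis
  proof
    assume "v = s" then show ?thesis using s0 by simp
  next
    assume "\<exists>k c. c > 0 \<and> (\<forall>n. c * avoid_prob K s n v \<le> avoid_prob K s (n + k) s)"
    then obtain k c where c: "c > 0" "\<And>n. c * avoid_prob K s n v \<le> avoid_prob K s (n + k) s" by blast
    have t: "(\<lambda>n. avoid_prob K s (n + k) s / c) \<longlonglongrightarrow> 0"
      by (rule tendsto_divide_zero) (rule LIMSEQ_ignore_initial_segment[OF s0])
    show ?thesis
    proof (rule tendsto_sandwich[OF _ _ tendsto_const t])
      show "\<forall>\<^sub>F n in sequentially. 0 \<le> avoid_prob K s n v"
        by (intro always_eventually allI avoid_ge0)
      show "\<forall>\<^sub>F n in sequentially. avoid_prob K s n v \<le> avoid_prob K s (n + k) s / c"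
      proof (intro always_eventually allI)
        fix n
        show "avoid_prob K s n v \<le> avoid_prob K s (n + k) s / c"
          using c(2)[of n] c(1) by (simp add: pos_le_divide_eq mult.commute)
      qed
    qed
  qed
qed

lemma map_remove1_hd:
  assumes "\<forall>u\<in>set w. P u = P' (f u)" "filter P w \<noteq> []"
  shows "map f (remove1 (hd (filter P w)) w) = remove1 (f (hd (filter P w))) (map f w)"
  using assms
proof (induction w)
  case Nil then show ?case by simp
next
  case (Cons u w)
  show ?case
  proof (cases "P u")
    case True then show ?thesis by simp
  next
    case False
    then have ne: "filter P w \<noteq> []" using Cons.prems by simp
    have hf: "hd (filter P w) \<in> set (filter P w)" using ne by (rule hd_in_set)
    have Ph: "P (hd (filter P w))" using hf by simp
    have hw: "hd (filter P w) \<in> set w" using hf by simp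
    have "u \<noteq> hd (filter P w)" using False Ph by auto
    moreover have "f u \<noteq> f (hd (filter P w))" using False Ph Cons.prems(1) hw by auto
    ultimately show ?thesis using False Cons by simp
  qed
qed

lemma step_comm:
  assumes eq: "\<forall>a\<in>V'. \<forall>b\<in>V'. E' a b = E (f a) (f b)" and i: "i \<in> V'" and w: "set w \<subseteq> V'"
  shows "map f (fcfs_step E' i w) = fcfs_step E (f i) (map f w)"
proof -
  have P: "\<forall>u\<in>set w. E' i u = E (f i) (f u)" using eq i w by auto
  have filt: "filter (E (f i)) (map f w) = map f (filter (E' i) w)"
    using P by (simp add: filter_map comp_def cong: filter_cong)
  have ex: "(\<exists>u\<in>set w. E' i u) = (\<exists>u\<in>set (map f w). E (f i) u)" using P by auto
  show ?thesis
  proof (cases "\<exists>u\<in>set w. E' i u")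
    case True
    then have ne: "filter (E' i) w \<noteq> []" by (simp add: filter_empty_conv)
    have "map f (remove1 (hd (filter (E' i) w)) w) = remove1 (f (hd (filter (E' i) w))) (map f w)"
      by (rule map_remove1_hd[where P="E' i" and P'="E (f i)" and f=f and w=w, OF P ne])
    moreover have "hd (filter (E (f i)) (map f w)) = f (hd (filter (E' i) w))"
      using ne filt by (simp add: hd_map)
    ultimately show ?thesis using True ex unfolding fcfs_step_def by simp
  next
    case False
    then show ?thesis using ex unfolding fcfs_step_def by simp
  qed
qed

theorem mainTheorem12:
  fixes V V' :: "'v set" and E E' :: "'v \<Rightarrow> 'v \<Rightarrow> bool"
    and \<alpha> \<beta> :: "'v pmf" and x y z :: 'v and \<pi>x \<pi>yz :: "'v list pmf"
  assumes "matching_model V E \<alpha>"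
    and "decomposition V E \<alpha> x y z V' E' \<beta>"
    and "positive_recurrent (fcfs_kernel E \<alpha>) (fcfs_states E \<alpha>)"
    and "positive_recurrent (fcfs_kernel E' \<beta>) (fcfs_states E' \<beta>)"
    and "stationary (fcfs_kernel E \<alpha>) (fcfs_states E \<alpha>) \<pi>x"
    and "stationary (fcfs_kernel E' \<beta>) (fcfs_states E' \<beta>) \<pi>yz"
  shows "mean_length \<pi>x = mean_length \<pi>yz"
proof -
  define f where "f u = (if u = y \<or> u = z then x else u)" for u
  have irr: "\<And>u. \<not> E u u" and sa: "set_pmf \<alpha> = V"
    using assms(1) by (auto simp: matching_model_def simple_graph_def)
  have xV: "x \<in> V" and yV: "y \<notin> V" and zV: "z \<notin> V" and yz: "y \<noteq> z"
    and V': "V' = (V - {x}) \<union> {y, z}"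
    and E': "\<And>u v. E' u v \<longleftrightarrow>
        (u \<in> V - {x} \<and> v \<in> V - {x} \<and> E u v)
      \<or> (u \<in> {y, z} \<and> v \<in> V - {x} \<and> E x v)
      \<or> (u \<in> V - {x} \<and> v \<in> {y, z} \<and> E u x)"
    and sb: "set_pmf \<beta> = V'"
    and pyz: "pmf \<beta> y + pmf \<beta> z = pmf \<alpha> x"
    and peq: "\<forall>i\<in>V - {x}. pmf \<beta> i = pmf \<alpha> i"
    using assms(2) unfolding decomposition_def by blast+
  have xy: "x \<noteq> y" "x \<noteq> z" using xV yV zV by auto
  have eq: "\<forall>a\<in>V'. \<forall>b\<in>V'. E' a b = E (f a) (f b)"
    using irr xy yz yV zV unfolding V' E' f_def by auto
  have fV: "\<And>i. i \<in> V' \<Longrightarrow> f i \<in> V" using xV unfolding V' f_def by auto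
  have mapb: "map_pmf f \<beta> = \<alpha>"
  proof (rule pmf_eqI)
    fix j
    have "x \<notin> set_pmf \<beta>" using sb xy by (simp add: V')
    then have bx: "pmf \<beta> x = 0" by (simp add: pmf_eq_0_set_pmf)
    show "pmf (map_pmf f \<beta>) j = pmf \<alpha> j"
    proof (cases "j = x")
      case True
      have "f -` {j} = {x, y, z}" using True unfolding f_def by (auto split: if_splits)
      then show ?thesis using True bx pyz xy yz by (simp add: pmf_map measure_measure_pmf_finite)
    next
      case jx: False
      show ?thesis
      proof (cases "j = y \<or> j = z")
        case True
        have "f -` {j} = {}" using True jx xy unfolding f_def by (auto split: if_splits)
        moreover have "pmf \<alpha> j = 0" using True yV zV sa by (auto simp: set_pmf_iff)
        ultimately show ?thesis by (simp add: pmf_map)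
      next
        case False
        have "f -` {j} = {j}" using False jx unfolding f_def by (auto split: if_splits)
        moreover have "pmf \<beta> j = pmf \<alpha> j"
        proof (cases "j \<in> V")
          case True then show ?thesis using peq jx by auto
        next
          case nV: False
          then have "j \<notin> V'" using False unfolding V' by auto
          then show ?thesis using nV sa sb by (metis pmf_eq_0_set_pmf)
        qed
        ultimately show ?thesis by (simp add: pmf_map measure_pmf_single)
      qed
    qed
  qed
  have kcomm: "fcfs_kernel E \<alpha> (map f w) = map_pmf (map f) (fcfs_kernel E' \<beta> w)" if w: "set w \<subseteq> V'" for w
  proof -
    have "map_pmf (map f) (fcfs_kernel E' \<beta> w) = map_pmf (\<lambda>i. map f (fcfs_step E' i w)) \<beta>"
      by (simp add: fcfs_kernel_def map_pmf_comp)
    also have "\<dots> = map_pmf (\<lambda>i. fcfs_step E (f i) (map f w)) \<beta>"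
      by (rule map_pmf_cong) (use step_comm[where V'=V' and E'=E' and E=E and f=f, OF eq _ w] sb in auto)
    also have "\<dots> = map_pmf (\<lambda>j. fcfs_step E j (map f w)) (map_pmf f \<beta>)"
      by (simp add: map_pmf_comp)
    finally show ?thesis by (simp add: mapb fcfs_kernel_def)
  qed
  have inv: "set w \<subseteq> V' \<and> map f w \<in> fcfs_states E \<alpha>" if "w \<in> fcfs_states E' \<beta>" for w
    using that unfolding fcfs_states_def mem_Collect_eq
  proof (induction rule: rtranclp_induct)
    case base then show ?case by simp
  next
    case (step u v)
    from step(2) obtain i where i: "i \<in> V'" "v = fcfs_step E' i u"
      using sb by (auto simp: fcfs_kernel_def)
    have "set v \<subseteq> V'" using i step(3) set_remove1_subset[of _ u] unfolding fcfs_step_def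
      by (auto split: if_splits)
    moreover have "map f v = fcfs_step E (f i) (map f u)"
      using step_comm[where V'=V' and E'=E' and E=E and f=f, OF eq i(1)] step(3) i(2) by auto
    moreover have "f i \<in> set_pmf \<alpha>" using fV[OF i(1)] sa by simp
    ultimately show ?case using step(3)
      by (auto intro: rtranclp.rtrancl_into_rtrancl simp: fcfs_kernel_def)
  qed
  let ?K = "fcfs_kernel E \<alpha>"
  define \<nu> where "\<nu> = map_pmf (map f) \<pi>yz"
  have sx: "set_pmf \<pi>x \<subseteq> fcfs_states E \<alpha>" and bx: "bind_pmf \<pi>x ?K = \<pi>x"
    using assms(5) by (auto simp: stationary_def)
  have sy: "set_pmf \<pi>yz \<subseteq> fcfs_states E' \<beta>" and bst: "bind_pmf \<pi>yz (fcfs_kernel E' \<beta>) = \<pi>yz"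
    using assms(6) by (auto simp: stationary_def)
  have e0: "[] \<in> fcfs_states E \<alpha>" by (simp add: fcfs_states_def)
  have summ: "summable (\<lambda>n. avoid_prob ?K [] n [])"
    using assms(3) e0 by (simp add: positive_recurrent_def)
  have to0: "(\<lambda>n. avoid_prob ?K [] n v) \<longlonglongrightarrow> 0" if "v \<in> fcfs_states E \<alpha>" for v
    by (rule avoid_to0[OF _ summ]) (use that in \<open>simp add: fcfs_states_def fcfs_kernel_def\<close>)
  have bnu: "bind_pmf \<nu> ?K = \<nu>"
  proof -
    have "bind_pmf \<nu> ?K = bind_pmf \<pi>yz (\<lambda>w. ?K (map f w))"
      by (simp add: \<nu>_def bind_map_pmf)
    also have "\<dots> = bind_pmf \<pi>yz (\<lambda>w. map_pmf (map f) (fcfs_kernel E' \<beta> w))"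
      by (rule bind_pmf_cong) (use sy inv kcomm in auto)
    also have "\<dots> = map_pmf (map f) (bind_pmf \<pi>yz (fcfs_kernel E' \<beta>))"
      by (simp add: map_bind_pmf)
    finally show ?thesis using bst by (simp add: \<nu>_def)
  qed
  have snu: "set_pmf \<nu> \<subseteq> fcfs_states E \<alpha>" using sy inv by (auto simp: \<nu>_def)
  have "\<pi>x = \<nu>"
    by (rule stat_unique[OF bx _ bnu]) (use sx snu to0 in auto)
  then show ?thesis by (simp add: mean_length_def \<nu>_def)
qed

end
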